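(* Let $\Gamma=\langle x,y,z\mid xy^{-1}=yz^{-1},\ xy^{-1}=zx^{-1}\rangle$ with generating set $\Delta=\{x,y,z\}$. Then $W=W_xU_x+W_yU_y+W_zU_z$ is a homogeneous scalar quantum walk on $C_\Delta(\Gamma)$ if and only if, up to a global phase, $W_x=\tfrac13(1+e^{i\phi_1}+e^{i\phi_2})$, $W_y=\tfrac13(1+e^{2\pi i/3}e^{i\phi_1}+e^{-2\pi i/3}e^{i\phi_2})$, $W_z=\tfrac13(1+e^{-2\pi i/3}e^{i\phi_1}+e^{2\pi i/3}e^{i\phi_2})$ for some real $\phi_1,\phi_2$ (with these three values nonzero). In particular such a walk exists.
   Context: The Cayley graph $C_\Delta(\Gamma)$ has vertex set $\Gamma$ and directed edges $(g,g\delta)$, $g\in\Gamma,\delta\in\Delta$. Let $\ell^2(\Gamma)$ have orthonormal basis $\{|g\rangle\}_{g\in\Gamma}$ and for $\delta\in\Gamma$ let $U_\delta|g\rangle=|g\delta\rangle$. A homogeneous scalar quantum walk on $C_\Delta(\Gamma)$ is a unitary operator $W=\sum_{\delta\in\Delta}W_\delta U_\delta$ with all complex coefficients $W_\delta$ nonzero. "Up to a global phase" means that all coefficients may be multiplied by a common complex number of modulus one. *)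

theory Defs
  imports "HOL-Analysis.Analysis"
begin

datatype gen = X | Y | Z

text \<open>A letter (g, True) stands for g, (g, False) for g^-1.\<close>
type_synonym letter = "gen \<times> bool"

definition linv :: "letter \<Rightarrow> letter" where
  "linv l = (fst l, \<not> snd l)"

text \<open>Relator words: (x y^-1)(y z^-1)^-1 = x y^-1 z y^-1 and (x y^-1)(z x^-1)^-1 = x y^-1 x z^-1.\<close>
definition relators :: "letter list set" where
  "relators = {[(X,True),(Y,False),(Z,True),(Y,False)], [(X,True),(Y,False),(X,True),(Z,False)]}"

inductive peq :: "letter list \<Rightarrow> letter list \<Rightarrow> bool" where
  peq_refl: "peq w w"
| peq_sym: "peq u w \<Longrightarrow> peq w u"
| peq_trans: "peq u v \<Longrightarrow> peq v w \<Longrightarrow> peq u w"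
| peq_free: "peq (u @ [l, linv l] @ v) (u @ v)"
| peq_rel: "r \<in> relators \<Longrightarrow> peq (u @ r @ v) (u @ v)"

definition cls :: "letter list \<Rightarrow> letter list set" where
  "cls w = {v. peq w v}"

definition Gamma :: "letter list set set" where
  "Gamma = range cls"

definition rmul_inv :: "letter list set \<Rightarrow> gen \<Rightarrow> letter list set" where
  "rmul_inv C g = cls ((SOME w. w \<in> C) @ [(g, False)])"

definition l2 :: "(letter list set \<Rightarrow> complex) set" where
  "l2 = {f. (\<forall>h. h \<notin> Gamma \<longrightarrow> f h = 0) \<and> (\<lambda>h. (cmod (f h))^2) summable_on Gamma}"

definition l2_inner :: "(letter list set \<Rightarrow> complex) \<Rightarrow> (letter list set \<Rightarrow> complex) \<Rightarrow> complex" where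
  "l2_inner f g = infsum (\<lambda>h. cnj (f h) * g h) Gamma"

definition unitary_l2 :: "((letter list set \<Rightarrow> complex) \<Rightarrow> (letter list set \<Rightarrow> complex)) \<Rightarrow> bool" where
  "unitary_l2 T \<longleftrightarrow>
     (\<forall>f\<in>l2. T f \<in> l2) \<and>
     (\<forall>f\<in>l2. \<forall>g\<in>l2. l2_inner (T f) (T g) = l2_inner f g) \<and>
     (\<forall>g\<in>l2. \<exists>f\<in>l2. T f = g)"

text \<open>U_g |h> = |h g>, i.e. (U_g f)(h) = f(h g^-1).\<close>
definition Uop :: "gen \<Rightarrow> (letter list set \<Rightarrow> complex) \<Rightarrow> (letter list set \<Rightarrow> complex)" where
  "Uop g f = (\<lambda>h. if h \<in> Gamma then f (rmul_inv h g) else 0)"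

definition walk :: "complex \<Rightarrow> complex \<Rightarrow> complex \<Rightarrow> (letter list set \<Rightarrow> complex) \<Rightarrow> (letter list set \<Rightarrow> complex)" where
  "walk Wx Wy Wz f = (\<lambda>h. Wx * Uop X f h + Wy * Uop Y f h + Wz * Uop Z f h)"

definition hsqw :: "complex \<Rightarrow> complex \<Rightarrow> complex \<Rightarrow> bool" where
  "hsqw Wx Wy Wz \<longleftrightarrow> Wx \<noteq> 0 \<and> Wy \<noteq> 0 \<and> Wz \<noteq> 0 \<and> unitary_l2 (walk Wx Wy Wz)"

end

theory Submission
  imports Defs
begin


lemma peq_cong: "peq a b \<Longrightarrow> peq (u@a@v) (u@b@v)"
proof (induction a b arbitrary: u v rule: peq.induct)
  case (peq_refl w) then show ?case by (rule peq.peq_refl)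
next
  case (peq_sym a b) then show ?case by (blast intro: peq.peq_sym)
next
  case (peq_trans a b c) then show ?case by (blast intro: peq.peq_trans)
next
  case (peq_free u' l v') then show ?case using peq.peq_free[of "u@u'" l "v'@v"] by simp
next
  case (peq_rel r u' v') then show ?case using peq.peq_rel[of r "u@u'" "v'@v"] by simp
qed

lemma peq_app_r: "peq a b \<Longrightarrow> peq (a@v) (b@v)"
  using peq_cong[of a b "[]" v] by simp

definition invw :: "letter list \<Rightarrow> letter list" where
  "invw w = rev (map linv w)"

lemma linv_linv[simp]: "linv (linv l) = l" by (simp add: linv_def)

lemma invw_simps[simp]: "invw [] = []" "invw (l#w) = invw w @ [linv l]"
  "invw (invw w) = w"
  by (simp_all add: invw_def rev_map comp_def)

lemma peq_w_invw: "peq (w @ invw w) []"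
proof (induction w)
  case Nil then show ?case by (simp add: peq_refl)
next
  case (Cons l w)
  have "peq ([l] @ (w @ invw w) @ [linv l]) ([l] @ [] @ [linv l])"
    by (rule peq_cong[OF Cons])
  moreover have "peq ([] @ [l, linv l] @ []) ([] @ [])" by (rule peq_free)
  ultimately show ?case by (auto intro: peq_trans)
qed

lemma peq_invw_w: "peq (invw w @ w) []"
  using peq_w_invw[of "invw w"] by simp

lemma peq_from_triv: assumes "peq (u @ invw v) []" shows "peq u v"
proof -
  have "peq (u @ (invw v @ v) @ []) (u @ [] @ [])" by (rule peq_cong[OF peq_invw_w])
  then have 1: "peq u (u @ invw v @ v)" by (simp add: peq_sym)
  have "peq ([] @ (u @ invw v) @ v) ([] @ [] @ v)" by (rule peq_cong[OF assms])
  then have "peq (u @ invw v @ v) v" by simp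
  with 1 show ?thesis by (rule peq_trans)
qed

lemma peq_rot: assumes "peq (l # r) []" shows "peq (r @ [l]) []"
proof -
  have "peq ([] @ [linv l, linv (linv l)] @ (r@[l])) ([] @ (r@[l]))" by (rule peq_free)
  then have 1: "peq (r@[l]) ([linv l] @ (l#r) @ [l])" by (simp add: peq_sym)
  have "peq ([linv l] @ (l#r) @ [l]) ([linv l] @ [] @ [l])" by (rule peq_cong[OF assms])
  moreover have "peq ([] @ [linv l, linv (linv l)] @ []) ([] @ [])" by (rule peq_free)
  ultimately show ?thesis using 1 by (auto intro: peq_trans)
qed

lemma peq_inv: assumes "peq w []" shows "peq (invw w) []"
proof -
  have "peq (invw w @ w @ []) (invw w @ [] @ [])" by (rule peq_cong[OF assms])
  then have "peq (invw w) (invw w @ w)" by (simp add: peq_sym)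
  then show ?thesis using peq_invw_w peq_trans by blast
qed

lemma R1: "peq [(X,True),(Y,False),(Z,True),(Y,False)] []"
  using peq_rel[of _ "[]" "[]"] by (simp add: relators_def)
lemma R2: "peq [(X,True),(Y,False),(X,True),(Z,False)] []"
  using peq_rel[of _ "[]" "[]"] by (simp add: relators_def)

lemma R1a: "peq [(Y,False),(Z,True),(Y,False),(X,True)] []" using peq_rot[OF R1] by simp
lemma R1b: "peq [(Z,True),(Y,False),(X,True),(Y,False)] []" using peq_rot[OF R1a] by simp
lemma R1c: "peq [(Y,False),(X,True),(Y,False),(Z,True)] []" using peq_rot[OF R1b] by simp
lemma R2a: "peq [(Y,False),(X,True),(Z,False),(X,True)] []" using peq_rot[OF R2] by simp
lemma R2b: "peq [(X,True),(Z,False),(X,True),(Y,False)] []" using peq_rot[OF R2a] by simp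
lemma R2c: "peq [(Z,False),(X,True),(Y,False),(X,True)] []" using peq_rot[OF R2b] by simp

lemma triv_inv: "peq w [] \<Longrightarrow> peq (invw w) []" by (rule peq_inv)

lemma id1: "peq [(X,True),(Y,False)] [(Y,True),(Z,False)]"
  by (rule peq_from_triv) (use R1 in \<open>simp add: linv_def\<close>)
lemma id2: "peq [(X,True),(Y,False)] [(Z,True),(X,False)]"
  by (rule peq_from_triv) (use R2 in \<open>simp add: linv_def\<close>)
lemma id3: "peq [(Y,True),(X,False)] [(Z,True),(Y,False)]"
  by (rule peq_from_triv) (use triv_inv[OF R1b] in \<open>simp add: linv_def\<close>)
lemma id4: "peq [(Y,True),(X,False)] [(X,True),(Z,False)]"
  by (rule peq_from_triv) (use triv_inv[OF R2b] in \<open>simp add: linv_def\<close>)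
lemma id5: "peq [(X,False),(Y,True)] [(Y,False),(Z,True)]"
  by (rule peq_from_triv) (use triv_inv[OF R1a] in \<open>simp add: linv_def\<close>)
lemma id6: "peq [(X,False),(Y,True)] [(Z,False),(X,True)]"
  by (rule peq_from_triv) (use triv_inv[OF R2c] in \<open>simp add: linv_def\<close>)
lemma id7: "peq [(Y,False),(X,True)] [(Z,False),(Y,True)]"
  by (rule peq_from_triv) (use R1c in \<open>simp add: linv_def\<close>)
lemma id8: "peq [(Y,False),(X,True)] [(X,False),(Z,True)]"
  by (rule peq_from_triv) (use R2a in \<open>simp add: linv_def\<close>)



lemma peq_equiv_sym: "peq u v \<Longrightarrow> peq v u" by (rule peq_sym)

lemma cls_eq: "cls u = cls v \<longleftrightarrow> peq u v"
proof
  assume "cls u = cls v"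
  moreover have "v \<in> cls v" by (simp add: cls_def peq_refl)
  ultimately have "v \<in> cls u" by simp
  then show "peq u v" by (simp add: cls_def)
next
  assume "peq u v"
  then show "cls u = cls v" unfolding cls_def by (auto intro: peq_trans peq_sym)
qed

lemma cls_in[simp]: "cls w \<in> Gamma" by (simp add: Gamma_def)

lemma GammaE: "h \<in> Gamma \<Longrightarrow> (\<And>w. h = cls w \<Longrightarrow> P) \<Longrightarrow> P"
  by (auto simp: Gamma_def)

lemma some_cls: "peq w (SOME v. v \<in> cls w)"
proof -
  have "w \<in> cls w" by (simp add: cls_def peq_refl)
  then have "(SOME v. v \<in> cls w) \<in> cls w" by (rule someI)
  then show ?thesis by (simp add: cls_def)
qed

lemma rmul_inv_cls[simp]: "rmul_inv (cls w) g = cls (w @ [(g,False)])"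
  unfolding rmul_inv_def cls_eq using peq_app_r[OF some_cls[of w]] by (simp add: peq_sym)

definition rmul :: "letter list set \<Rightarrow> gen \<Rightarrow> letter list set" where
  "rmul C g = cls ((SOME w. w \<in> C) @ [(g, True)])"

lemma rmul_cls[simp]: "rmul (cls w) g = cls (w @ [(g,True)])"
  unfolding rmul_def cls_eq using peq_app_r[OF some_cls[of w]] by (simp add: peq_sym)

lemma cancel1: "cls (w @ [(g,b),(g,\<not>b)]) = cls w"
  unfolding cls_eq using peq_free[of w "(g,b)" "[]"] by (simp add: linv_def)

lemma rmul_rmul_inv: "h \<in> Gamma \<Longrightarrow> rmul (rmul_inv h g) g = h"
  by (erule GammaE) (simp add: cancel1[of _ _ False, simplified])
lemma rmul_inv_rmul: "h \<in> Gamma \<Longrightarrow> rmul_inv (rmul h g) g = h"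
  by (erule GammaE) (simp add: cancel1[of _ _ True, simplified])
lemma rmul_in[simp]: "h \<in> Gamma \<Longrightarrow> rmul h g \<in> Gamma"
  by (erule GammaE) simp
lemma rmul_inv_in[simp]: "h \<in> Gamma \<Longrightarrow> rmul_inv h g \<in> Gamma"
  by (erule GammaE) simp

lemma cls_app2: "peq [a,b] [c,d] \<Longrightarrow> cls (w @ [a,b]) = cls (w @ [c,d])"
  unfolding cls_eq using peq_cong[of "[a,b]" "[c,d]" w "[]"] by simp

lemma aX: "h \<in> Gamma \<Longrightarrow> rmul_inv (rmul h X) Y = rmul_inv (rmul h Y) Z"
  by (erule GammaE) (simp add: cls_app2[OF id1])
lemma aY: "h \<in> Gamma \<Longrightarrow> rmul_inv (rmul h X) Y = rmul_inv (rmul h Z) X"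
  by (erule GammaE) (simp add: cls_app2[OF id2])
lemma bX: "h \<in> Gamma \<Longrightarrow> rmul_inv (rmul h Y) X = rmul_inv (rmul h Z) Y"
  by (erule GammaE) (simp add: cls_app2[OF id3])
lemma bY: "h \<in> Gamma \<Longrightarrow> rmul_inv (rmul h Y) X = rmul_inv (rmul h X) Z"
  by (erule GammaE) (simp add: cls_app2[OF id4])
lemma cX: "h \<in> Gamma \<Longrightarrow> rmul (rmul_inv h X) Y = rmul (rmul_inv h Y) Z"
  by (erule GammaE) (simp add: cls_app2[OF id5])
lemma cY: "h \<in> Gamma \<Longrightarrow> rmul (rmul_inv h X) Y = rmul (rmul_inv h Z) X"
  by (erule GammaE) (simp add: cls_app2[OF id6])
lemma dX: "h \<in> Gamma \<Longrightarrow> rmul (rmul_inv h Y) X = rmul (rmul_inv h Z) Y"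
  by (erule GammaE) (simp add: cls_app2[OF id7])
lemma dY: "h \<in> Gamma \<Longrightarrow> rmul (rmul_inv h Y) X = rmul (rmul_inv h X) Z"
  by (erule GammaE) (simp add: cls_app2[OF id8])

fun gv :: "gen \<Rightarrow> int" where "gv X = 0" | "gv Y = 2" | "gv Z = 1"
definition lv :: "letter \<Rightarrow> int" where "lv l = (if snd l then gv (fst l) else - gv (fst l))"
definition wv :: "letter list \<Rightarrow> int" where "wv w = (sum_list (map lv w)) mod 3"

lemma wv_peq: "peq u v \<Longrightarrow> wv u = wv v"
proof (induction rule: peq.induct)
  case (peq_free u l v) then show ?case
    by (simp add: wv_def lv_def linv_def mod_add_left_eq mod_add_right_eq)
next
  case (peq_rel r u v) then show ?case
    by (auto simp: relators_def wv_def lv_def) (simp_all add: algebra_simps)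
qed auto

lemma cls_neq: "wv u \<noteq> wv v \<Longrightarrow> cls u \<noteq> cls v"
  using wv_peq cls_eq by blast



lemma sq_bound: "(cmod (x + y))^2 \<le> 2*(cmod x)^2 + 2*(cmod y)^2"
proof -
  have "cmod (x+y) \<le> cmod x + cmod y" by (rule norm_triangle_ineq)
  then have "(cmod (x+y))^2 \<le> (cmod x + cmod y)^2" by (simp add: power_mono)
  also have "\<dots> \<le> 2*(cmod x)^2 + 2*(cmod y)^2"
  proof -
    have "0 \<le> (cmod x - cmod y)^2" by simp
    then show ?thesis by (simp add: power2_eq_square algebra_simps)
  qed
  finally show ?thesis .
qed

lemma l2_add: assumes "f \<in> l2" "g \<in> l2" shows "(\<lambda>h. f h + g h) \<in> l2"
proof -
  have "(\<lambda>h. 2*(cmod (f h))^2 + 2*(cmod (g h))^2) summable_on Gamma"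
    using assms by (intro summable_on_add summable_on_cmult_right) (auto simp: l2_def)
  then have "(\<lambda>h. (cmod (f h + g h))^2) summable_on Gamma"
    by (rule summable_on_comparison_test) (auto simp: sq_bound)
  then show ?thesis using assms by (auto simp: l2_def)
qed

lemma l2_scale: assumes "f \<in> l2" shows "(\<lambda>h. a * f h) \<in> l2"
proof -
  have "(\<lambda>h. (cmod a)^2 * (cmod (f h))^2) summable_on Gamma"
    using assms by (intro summable_on_cmult_right) (auto simp: l2_def)
  then show ?thesis using assms by (auto simp: l2_def norm_mult power_mult_distrib)
qed

lemma l2_zero: "f \<in> l2 \<Longrightarrow> h \<notin> Gamma \<Longrightarrow> f h = 0" by (simp add: l2_def)

lemma prod_summable: assumes "f \<in> l2" "g \<in> l2"
  shows "(\<lambda>h. cnj (f h) * g h) summable_on Gamma"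
proof -
  have "(\<lambda>h. (cmod (f h))^2 + (cmod (g h))^2) summable_on Gamma"
    using assms by (intro summable_on_add) (auto simp: l2_def)
  then have "(\<lambda>h. norm (cnj (f h) * g h)) summable_on Gamma"
  proof (rule summable_on_comparison_test)
    fix h
    have "cmod (f h) * cmod (g h) \<le> (cmod (f h))^2 + (cmod (g h))^2"
    proof -
      have "0 \<le> (cmod (f h) - cmod (g h))^2" by simp
      then have A: "2*(cmod (f h) * cmod (g h)) \<le> cmod (f h) * cmod (f h) + cmod (g h) * cmod (g h)"
        by (simp add: power2_eq_square algebra_simps)
      have B: "0 \<le> cmod (f h) * cmod (g h)" by simp
      show ?thesis unfolding power2_eq_square using A B by linarith
    qed
    then show "norm (cnj (f h) * g h) \<le> (cmod (f h))^2 + (cmod (g h))^2"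
      by (simp add: norm_mult)
  qed simp
  then show ?thesis using summable_on_iff_abs_summable_on_complex by blast
qed

definition Uinv :: "gen \<Rightarrow> (letter list set \<Rightarrow> complex) \<Rightarrow> (letter list set \<Rightarrow> complex)" where
  "Uinv g f = (\<lambda>h. if h \<in> Gamma then f (rmul h g) else 0)"

lemma Uop_l2: assumes "f \<in> l2" shows "Uop g f \<in> l2"
proof -
  have "(\<lambda>h. (cmod (f (rmul_inv h g)))^2) summable_on Gamma \<longleftrightarrow> (\<lambda>h. (cmod (f h))^2) summable_on Gamma"
    by (rule summable_on_reindex_bij_witness[where i="\<lambda>h. rmul h g" and j="\<lambda>h. rmul_inv h g"])
       (auto simp: rmul_rmul_inv rmul_inv_rmul)
  then have "(\<lambda>h. (cmod (Uop g f h))^2) summable_on Gamma"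
    using assms by (subst summable_on_cong[where g="\<lambda>h. (cmod (f (rmul_inv h g)))^2"]) (auto simp: l2_def Uop_def)
  then show ?thesis by (auto simp: l2_def Uop_def)
qed

lemma Uinv_l2: assumes "f \<in> l2" shows "Uinv g f \<in> l2"
proof -
  have "(\<lambda>h. (cmod (f (rmul h g)))^2) summable_on Gamma \<longleftrightarrow> (\<lambda>h. (cmod (f h))^2) summable_on Gamma"
    by (rule summable_on_reindex_bij_witness[where j="\<lambda>h. rmul h g" and i="\<lambda>h. rmul_inv h g"])
       (auto simp: rmul_rmul_inv rmul_inv_rmul)
  then have "(\<lambda>h. (cmod (Uinv g f h))^2) summable_on Gamma"
    using assms by (subst summable_on_cong[where g="\<lambda>h. (cmod (f (rmul h g)))^2"]) (auto simp: l2_def Uinv_def)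
  then show ?thesis by (auto simp: l2_def Uinv_def)
qed

lemma walk_l2: assumes "f \<in> l2" shows "walk a b c f \<in> l2"
proof -
  have "(\<lambda>h. (\<lambda>h. a * Uop X f h + b * Uop Y f h) h + c * Uop Z f h) \<in> l2"
    by (intro l2_add l2_scale Uop_l2 assms)
  then show ?thesis by (simp add: walk_def)
qed

lemma infsum3:
  fixes p q r :: "'a \<Rightarrow> complex"
  assumes "p summable_on A" "q summable_on A" "r summable_on A"
  shows "infsum (\<lambda>h. a * p h + b * q h + c * r h) A = a * infsum p A + b * infsum q A + c * infsum r A"
proof -
  have 1: "(\<lambda>h. a * p h) summable_on A" "(\<lambda>h. b * q h) summable_on A" "(\<lambda>h. c * r h) summable_on A"
    using assms by (auto intro: summable_on_cmult_right)
  have "infsum (\<lambda>h. a * p h + b * q h + c * r h) A = infsum (\<lambda>h. a * p h + b * q h) A + infsum (\<lambda>h. c * r h) A"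
    using 1 by (intro infsum_add summable_on_add)
  also have "\<dots> = infsum (\<lambda>h. a * p h) A + infsum (\<lambda>h. b * q h) A + infsum (\<lambda>h. c * r h) A"
    using 1 by (simp add: infsum_add)
  also have "\<dots> = a * infsum p A + b * infsum q A + c * infsum r A"
    using assms by (simp add: infsum_cmult_right)
  finally show ?thesis .
qed

lemma reidx: assumes "f \<in> l2" "g \<in> l2"
  shows "infsum (\<lambda>h. cnj (Uop a f h) * Uop b g h) Gamma
       = infsum (\<lambda>k. cnj (f k) * g (rmul_inv (rmul k a) b)) Gamma"
  by (rule infsum_reindex_bij_witness[where i="\<lambda>h. rmul h a" and j="\<lambda>h. rmul_inv h a"])
     (auto simp: rmul_rmul_inv rmul_inv_rmul Uop_def)



lemma walk_in: "h \<in> Gamma \<Longrightarrow> walk a b c f h = a * f (rmul_inv h X) + b * f (rmul_inv h Y) + c * f (rmul_inv h Z)"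
  by (simp add: walk_def Uop_def)
lemma walk_out: "h \<notin> Gamma \<Longrightarrow> walk a b c f h = 0"
  by (simp add: walk_def Uop_def)

lemma inner_walk:
  assumes f: "f \<in> l2" and g: "g \<in> l2"
  assumes N: "cnj c0*c0 + cnj c1*c1 + cnj c2*c2 = 1" and S: "cnj c0*c1 + cnj c1*c2 + cnj c2*c0 = 0"
  shows "l2_inner (walk c0 c1 c2 f) (walk c0 c1 c2 g) = l2_inner f g"
proof -
  define W where "W = walk c0 c1 c2"
  define I where "I a b = infsum (\<lambda>k. cnj (f k) * g (rmul_inv (rmul k a) b)) Gamma" for a b
  have Wg: "W g \<in> l2" unfolding W_def by (rule walk_l2[OF g])
  have Q: "infsum (\<lambda>h. cnj (Uop a f h) * W g h) Gamma = c0 * I a X + c1 * I a Y + c2 * I a Z" for a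
  proof -
    have "infsum (\<lambda>h. cnj (Uop a f h) * W g h) Gamma
        = infsum (\<lambda>h. c0 * (cnj (Uop a f h) * Uop X g h) + c1 * (cnj (Uop a f h) * Uop Y g h)
                     + c2 * (cnj (Uop a f h) * Uop Z g h)) Gamma"
      by (rule infsum_cong) (simp add: W_def walk_def algebra_simps)
    also have "\<dots> = c0 * infsum (\<lambda>h. cnj (Uop a f h) * Uop X g h) Gamma
                  + c1 * infsum (\<lambda>h. cnj (Uop a f h) * Uop Y g h) Gamma
                  + c2 * infsum (\<lambda>h. cnj (Uop a f h) * Uop Z g h) Gamma"
      by (intro infsum3 prod_summable Uop_l2 f g)
    also have "\<dots> = c0 * I a X + c1 * I a Y + c2 * I a Z"
      unfolding I_def by (simp add: reidx f g)
    finally show ?thesis .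
  qed
  have "l2_inner (W f) (W g)
      = infsum (\<lambda>h. cnj c0 * (cnj (Uop X f h) * W g h) + cnj c1 * (cnj (Uop Y f h) * W g h)
                   + cnj c2 * (cnj (Uop Z f h) * W g h)) Gamma"
    unfolding l2_inner_def by (rule infsum_cong) (simp add: W_def walk_def algebra_simps)
  also have "\<dots> = cnj c0 * infsum (\<lambda>h. cnj (Uop X f h) * W g h) Gamma
                + cnj c1 * infsum (\<lambda>h. cnj (Uop Y f h) * W g h) Gamma
                + cnj c2 * infsum (\<lambda>h. cnj (Uop Z f h) * W g h) Gamma"
    by (intro infsum3 prod_summable Uop_l2 f Wg)
  also have "\<dots> = cnj c0 * (c0 * I X X + c1 * I X Y + c2 * I X Z)
                + cnj c1 * (c0 * I Y X + c1 * I Y Y + c2 * I Y Z)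
                + cnj c2 * (c0 * I Z X + c1 * I Z Y + c2 * I Z Z)"
    by (simp only: Q)
  finally have E: "l2_inner (W f) (W g) = cnj c0 * (c0 * I X X + c1 * I X Y + c2 * I X Z)
                + cnj c1 * (c0 * I Y X + c1 * I Y Y + c2 * I Y Z)
                + cnj c2 * (c0 * I Z X + c1 * I Z Y + c2 * I Z Z)" .
  have D: "I X X = l2_inner f g" "I Y Y = l2_inner f g" "I Z Z = l2_inner f g"
    unfolding I_def l2_inner_def by (auto intro!: infsum_cong simp: rmul_inv_rmul)
  have O: "I Y Z = I X Y" "I Z X = I X Y" "I Z Y = I Y X" "I X Z = I Y X"
    unfolding I_def by (auto intro!: infsum_cong simp: aX[symmetric] aY[symmetric] bX[symmetric] bY[symmetric])
  have "l2_inner (W f) (W g) = (cnj c0*c0 + cnj c1*c1 + cnj c2*c2) * l2_inner f g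
        + (cnj c0*c1 + cnj c1*c2 + cnj c2*c0) * I X Y + cnj (cnj c0*c1 + cnj c1*c2 + cnj c2*c0) * I Y X"
    unfolding E D O by (simp add: algebra_simps)
  then show ?thesis using N S by (simp add: W_def)
qed

lemma unitary_if:
  assumes N: "cnj c0*c0 + cnj c1*c1 + cnj c2*c2 = 1" and S: "cnj c0*c1 + cnj c1*c2 + cnj c2*c0 = 0"
  shows "unitary_l2 (walk c0 c1 c2)"
  unfolding unitary_l2_def
proof (intro conjI ballI)
  fix f assume "f \<in> l2" then show "walk c0 c1 c2 f \<in> l2" by (rule walk_l2)
next
  fix f g assume "f \<in> l2" "g \<in> l2" then show "l2_inner (walk c0 c1 c2 f) (walk c0 c1 c2 g) = l2_inner f g"
    using inner_walk N S by blast
next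
  fix g assume g: "g \<in> l2"
  define f where "f = (\<lambda>h. (\<lambda>h. cnj c0 * Uinv X g h + cnj c1 * Uinv Y g h) h + cnj c2 * Uinv Z g h)"
  have fl: "f \<in> l2" unfolding f_def by (intro l2_add l2_scale Uinv_l2 g)
  have "walk c0 c1 c2 f = g"
  proof
    fix h show "walk c0 c1 c2 f h = g h"
    proof (cases "h \<in> Gamma")
      case False then show ?thesis using g by (simp add: walk_out l2_zero)
    next
      case True
      have "walk c0 c1 c2 f h = (cnj c0*c0 + cnj c1*c1 + cnj c2*c2) * g h
          + cnj (cnj c0*c1 + cnj c1*c2 + cnj c2*c0) * g (rmul (rmul_inv h X) Y)
          + (cnj c0*c1 + cnj c1*c2 + cnj c2*c0) * g (rmul (rmul_inv h Y) X)"
        using True by (simp add: walk_in f_def Uinv_def rmul_rmul_inv cX[symmetric] cY[symmetric]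
             dX[symmetric] dY[symmetric] algebra_simps)
      then show ?thesis using N S by simp
    qed
  qed
  then show "\<exists>f\<in>l2. walk c0 c1 c2 f = g" using fl by blast
qed



definition delta :: "letter list \<Rightarrow> letter list set \<Rightarrow> complex" where
  "delta w = (\<lambda>h. if h = cls w then 1 else 0)"

lemma delta_l2: "delta w \<in> l2"
proof -
  have "(\<lambda>h. (cmod (delta w h))^2) summable_on Gamma \<longleftrightarrow> (\<lambda>h. (cmod (delta w h))^2) summable_on {cls w}"
    by (rule summable_on_cong_neutral) (auto simp: delta_def)
  then show ?thesis by (auto simp: l2_def delta_def)
qed

lemma rmul_inv_eq: "h \<in> Gamma \<Longrightarrow> k \<in> Gamma \<Longrightarrow> rmul_inv h a = k \<longleftrightarrow> h = rmul k a"
  using rmul_rmul_inv rmul_inv_rmul by metis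

lemma walk_delta: "walk a b c (delta w) = (\<lambda>h. (if h = cls (w@[(X,True)]) then a else 0)
   + (if h = cls (w@[(Y,True)]) then b else 0) + (if h = cls (w@[(Z,True)]) then c else 0))"
proof
  fix h show "walk a b c (delta w) h = (if h = cls (w@[(X,True)]) then a else 0)
   + (if h = cls (w@[(Y,True)]) then b else 0) + (if h = cls (w@[(Z,True)]) then c else 0)"
  proof (cases "h \<in> Gamma")
    case False
    then have "h \<noteq> cls v" for v using cls_in by metis
    then show ?thesis using False by (simp add: walk_out)
  next
    case True
    then show ?thesis by (simp add: walk_in delta_def rmul_inv_eq)
  qed
qed

lemma inner_fin:
  assumes "finite T" "T \<subseteq> Gamma" "\<And>h. h \<notin> T \<Longrightarrow> F h = 0"
  shows "l2_inner F G = (\<Sum>h\<in>T. cnj (F h) * G h)"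
proof -
  have "l2_inner F G = infsum (\<lambda>h. cnj (F h) * G h) T"
    unfolding l2_inner_def by (rule infsum_cong_neutral) (use assms in auto)
  then show ?thesis using assms by simp
qed

abbreviation "xx \<equiv> cls [(X,True)]"
abbreviation "yy \<equiv> cls [(Y,True)]"
abbreviation "zz \<equiv> cls [(Z,True)]"

lemma dist: "xx \<noteq> yy" "xx \<noteq> zz" "yy \<noteq> zz" "cls [] \<noteq> cls [(Y,True),(X,False)]"
  by (auto intro!: cls_neq simp: wv_def lv_def)

lemma p_mults: "cls [(Y,True),(X,False),(X,True)] = yy"
  "cls [(Y,True),(X,False),(Y,True)] = zz" "cls [(Y,True),(X,False),(Z,True)] = xx"
proof -
  show "cls [(Y,True),(X,False),(X,True)] = yy"
    using cancel1[of "[(Y,True)]" X False] by simp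
  have "cls [(Y,True),(X,False),(Y,True)] = cls [(Z,True),(Y,False),(Y,True)]"
    unfolding cls_eq using peq_app_r[OF id3, of "[(Y,True)]"] by simp
  also have "\<dots> = zz" using cancel1[of "[(Z,True)]" Y False] by simp
  finally show "cls [(Y,True),(X,False),(Y,True)] = zz" .
  have "cls [(Y,True),(X,False),(Z,True)] = cls [(X,True),(Z,False),(Z,True)]"
    unfolding cls_eq using peq_app_r[OF id4, of "[(Z,True)]"] by simp
  also have "\<dots> = xx" using cancel1[of "[(X,True)]" Z False] by simp
  finally show "cls [(Y,True),(X,False),(Z,True)] = xx" .
qed

lemma necessary:
  assumes U: "unitary_l2 (walk c0 c1 c2)"
  shows "cnj c0*c0 + cnj c1*c1 + cnj c2*c2 = 1" "cnj c0*c1 + cnj c1*c2 + cnj c2*c0 = 0"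
proof -
  have pres: "l2_inner (walk c0 c1 c2 f) (walk c0 c1 c2 g) = l2_inner f g" if "f \<in> l2" "g \<in> l2" for f g
    using U that unfolding unitary_l2_def by blast
  define T where "T = {xx, yy, zz}"
  have T: "finite T" "T \<subseteq> Gamma" by (auto simp: T_def)
  have We: "walk c0 c1 c2 (delta []) = (\<lambda>h. (if h = xx then c0 else 0) + (if h = yy then c1 else 0) + (if h = zz then c2 else 0))"
    by (simp add: walk_delta)
  have Wp: "walk c0 c1 c2 (delta [(Y,True),(X,False)]) = (\<lambda>h. (if h = yy then c0 else 0) + (if h = zz then c1 else 0) + (if h = xx then c2 else 0))"
    by (simp add: walk_delta p_mults)
  have "l2_inner (walk c0 c1 c2 (delta [])) (walk c0 c1 c2 (delta [])) = cnj c0*c0 + cnj c1*c1 + cnj c2*c2"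
    unfolding We by (subst inner_fin[OF T]) (auto simp: T_def dist dist[symmetric])
  moreover have "l2_inner (delta []) (delta []) = 1"
    by (subst inner_fin[of "{cls []}"]) (auto simp: delta_def)
  ultimately show "cnj c0*c0 + cnj c1*c1 + cnj c2*c2 = 1" using pres delta_l2 by metis
  have "l2_inner (walk c0 c1 c2 (delta [])) (walk c0 c1 c2 (delta [(Y,True),(X,False)])) = cnj c0*c2 + cnj c1*c0 + cnj c2*c1"
    unfolding We Wp by (subst inner_fin[OF T]) (auto simp: T_def dist dist[symmetric])
  moreover have "l2_inner (delta []) (delta [(Y,True),(X,False)]) = 0"
    by (subst inner_fin[of "{cls []}"]) (auto simp: delta_def dist)
  ultimately have "cnj c0*c2 + cnj c1*c0 + cnj c2*c1 = 0" using pres delta_l2 by metis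
  then have "cnj (cnj c0*c2 + cnj c1*c0 + cnj c2*c1) = 0" by simp
  then show "cnj c0*c1 + cnj c1*c2 + cnj c2*c0 = 0" by (simp add: algebra_simps)
qed



lemma omega_facts:
  "cis (2*pi/3) * cis (-(2*pi/3)) = 1" "1 + cis (2*pi/3) + cis (-(2*pi/3)) = 0"
  "cnj (cis (2*pi/3)) = cis (-(2*pi/3))" "cnj (cis (-(2*pi/3))) = cis (2*pi/3)"
  by (simp_all add: cis_mult cis_cnj complex_eq_iff cos_120 sin_120)

lemma cis_unit: "cmod z = 1 \<Longrightarrow> cis (Arg z) = z"
  by (subst cis_Arg) (auto simp: sgn_div_norm)

lemma cmod1: "z * cnj z = 1 \<Longrightarrow> cmod z = 1"
proof -
  assume a: "z * cnj z = 1"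
  have "complex_of_real ((cmod z)^2) = z * cnj z" by (rule complex_norm_square)
  then have "complex_of_real ((cmod z)^2) = 1" using a by (simp only:)
  then have "(cmod z)^2 = 1" by (simp only: of_real_eq_1_iff)
  then show "cmod z = 1" by (simp add: power2_eq_1_iff) (smt (verit) norm_ge_zero)
qed

lemma param_imp:
  assumes "Wx = cis \<theta> * ((1 + cis \<phi>1 + cis \<phi>2) / 3)"
    "Wy = cis \<theta> * ((1 + cis (2*pi/3) * cis \<phi>1 + cis (-(2*pi/3)) * cis \<phi>2) / 3)"
    "Wz = cis \<theta> * ((1 + cis (-(2*pi/3)) * cis \<phi>1 + cis (2*pi/3) * cis \<phi>2) / 3)"
  shows "cnj Wx*Wx + cnj Wy*Wy + cnj Wz*Wz = 1" "cnj Wx*Wy + cnj Wy*Wz + cnj Wz*Wx = 0"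
proof -
  define w q t u p where "w = cis (2*pi/3)" and "q = cis (-(2*pi/3))" and "t = cis \<theta>" and "u = cis \<phi>1" and "p = cis \<phi>2"
  have h: "w*q = 1" "1+w+q = 0" "t * cnj t = 1" "u * cnj u = 1" "p * cnj p = 1"
    unfolding w_def q_def t_def u_def p_def using omega_facts by (simp_all add: cis_cnj cis_mult)
  have c: "cnj w = q" "cnj q = w" unfolding w_def q_def using omega_facts by simp_all
  have X: "Wx = t * ((1 + u + p)/3)" "Wy = t * ((1 + w*u + q*p)/3)" "Wz = t * ((1 + q*u + w*p)/3)"
    using assms unfolding w_def q_def t_def u_def p_def by simp_all
  show "cnj Wx*Wx + cnj Wy*Wy + cnj Wz*Wz = 1" unfolding X using h c
    by (simp add: field_simps) algebra
  show "cnj Wx*Wy + cnj Wy*Wz + cnj Wz*Wx = 0" unfolding X using h c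
    by (simp add: field_simps) algebra
qed

lemma imp_param:
  assumes N: "cnj c0*c0 + cnj c1*c1 + cnj c2*c2 = 1" and S: "cnj c0*c1 + cnj c1*c2 + cnj c2*c0 = 0"
  shows "\<exists>\<theta> \<phi>1 \<phi>2 :: real.
                c0 = cis \<theta> * ((1 + cis \<phi>1 + cis \<phi>2) / 3) \<and>
                c1 = cis \<theta> * ((1 + cis (2*pi/3) * cis \<phi>1 + cis (-(2*pi/3)) * cis \<phi>2) / 3) \<and>
                c2 = cis \<theta> * ((1 + cis (-(2*pi/3)) * cis \<phi>1 + cis (2*pi/3) * cis \<phi>2) / 3)"
proof -
  define w q where "w = cis (2*pi/3)" and "q = cis (-(2*pi/3))"
  have h: "w*q = 1" "1+w+q = 0" unfolding w_def q_def using omega_facts by simp_all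
  have c: "cnj w = q" "cnj q = w" unfolding w_def q_def using omega_facts by simp_all
  have S': "c0 * cnj c1 + c1 * cnj c2 + c2 * cnj c0 = 0"
  proof -
    have "cnj (cnj c0*c1 + cnj c1*c2 + cnj c2*c0) = 0" using S by simp
    then show ?thesis by (simp add: algebra_simps)
  qed
  define L0 L1 L2 where "L0 = c0 + c1 + c2" and "L1 = c0 + q*c1 + w*c2" and "L2 = c0 + w*c1 + q*c2"
  have n0: "L0 * cnj L0 = 1" unfolding L0_def using N S S' by (simp add: algebra_simps) algebra
  have n1: "L1 * cnj L1 = 1" unfolding L1_def using N S S' h c by (simp add: algebra_simps) algebra
  have n2: "L2 * cnj L2 = 1" unfolding L2_def using N S S' h c by (simp add: algebra_simps) algebra
  have m: "cmod L0 = 1" "cmod L1 = 1" "cmod L2 = 1" using cmod1 n0 n1 n2 by blast+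
  have L0nz: "L0 \<noteq> 0" using m by auto
  have m': "cmod (L1/L0) = 1" "cmod (L2/L0) = 1" using m by (simp_all add: norm_divide)
  define \<theta> \<phi>1 \<phi>2 where "\<theta> = Arg L0" and "\<phi>1 = Arg (L1/L0)" and "\<phi>2 = Arg (L2/L0)"
  have e: "cis \<theta> = L0" "cis \<phi>1 = L1/L0" "cis \<phi>2 = L2/L0"
    unfolding \<theta>_def \<phi>1_def \<phi>2_def using cis_unit m m' by simp_all
  have f: "cis \<theta> * ((1 + cis \<phi>1 + cis \<phi>2) / 3) = (L0 + L1 + L2)/3"
    "cis \<theta> * ((1 + w * cis \<phi>1 + q * cis \<phi>2) / 3) = (L0 + w*L1 + q*L2)/3"
    "cis \<theta> * ((1 + q * cis \<phi>1 + w * cis \<phi>2) / 3) = (L0 + q*L1 + w*L2)/3"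
    unfolding e using L0nz by (simp_all add: field_simps)
  show ?thesis
  proof (intro exI conjI)
    show "c0 = cis \<theta> * ((1 + cis \<phi>1 + cis \<phi>2) / 3)"
      unfolding f L0_def L1_def L2_def using h by algebra
    show "c1 = cis \<theta> * ((1 + cis (2*pi/3) * cis \<phi>1 + cis (-(2*pi/3)) * cis \<phi>2) / 3)"
      unfolding w_def[symmetric] q_def[symmetric] f unfolding L0_def L1_def L2_def using h by algebra
    show "c2 = cis \<theta> * ((1 + cis (-(2*pi/3)) * cis \<phi>1 + cis (2*pi/3) * cis \<phi>2) / 3)"
      unfolding w_def[symmetric] q_def[symmetric] f unfolding L0_def L1_def L2_def using h by algebra
  qed
qed



theorem mainTheorem4:
  shows "(\<forall>Wx Wy Wz. hsqw Wx Wy Wz \<longleftrightarrow>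
            (Wx \<noteq> 0 \<and> Wy \<noteq> 0 \<and> Wz \<noteq> 0 \<and>
             (\<exists>\<theta> \<phi>1 \<phi>2 :: real.
                Wx = cis \<theta> * ((1 + cis \<phi>1 + cis \<phi>2) / 3) \<and>
                Wy = cis \<theta> * ((1 + cis (2*pi/3) * cis \<phi>1 + cis (-(2*pi/3)) * cis \<phi>2) / 3) \<and>
                Wz = cis \<theta> * ((1 + cis (-(2*pi/3)) * cis \<phi>1 + cis (2*pi/3) * cis \<phi>2) / 3))))
         \<and> (\<exists>Wx Wy Wz. hsqw Wx Wy Wz)"
proof -
  have A: "hsqw Wx Wy Wz \<longleftrightarrow>
            (Wx \<noteq> 0 \<and> Wy \<noteq> 0 \<and> Wz \<noteq> 0 \<and>
             (\<exists>\<theta> \<phi>1 \<phi>2 :: real.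
                Wx = cis \<theta> * ((1 + cis \<phi>1 + cis \<phi>2) / 3) \<and>
                Wy = cis \<theta> * ((1 + cis (2*pi/3) * cis \<phi>1 + cis (-(2*pi/3)) * cis \<phi>2) / 3) \<and>
                Wz = cis \<theta> * ((1 + cis (-(2*pi/3)) * cis \<phi>1 + cis (2*pi/3) * cis \<phi>2) / 3)))" for Wx Wy Wz
  proof
    assume "hsqw Wx Wy Wz"
    then have nz: "Wx \<noteq> 0" "Wy \<noteq> 0" "Wz \<noteq> 0" and U: "unitary_l2 (walk Wx Wy Wz)" by (auto simp: hsqw_def)
    then show "Wx \<noteq> 0 \<and> Wy \<noteq> 0 \<and> Wz \<noteq> 0 \<and>
             (\<exists>\<theta> \<phi>1 \<phi>2 :: real.
                Wx = cis \<theta> * ((1 + cis \<phi>1 + cis \<phi>2) / 3) \<and>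
                Wy = cis \<theta> * ((1 + cis (2*pi/3) * cis \<phi>1 + cis (-(2*pi/3)) * cis \<phi>2) / 3) \<and>
                Wz = cis \<theta> * ((1 + cis (-(2*pi/3)) * cis \<phi>1 + cis (2*pi/3) * cis \<phi>2) / 3))"
      using nz imp_param[OF necessary[OF U]] by blast
  next
    assume "Wx \<noteq> 0 \<and> Wy \<noteq> 0 \<and> Wz \<noteq> 0 \<and>
             (\<exists>\<theta> \<phi>1 \<phi>2 :: real.
                Wx = cis \<theta> * ((1 + cis \<phi>1 + cis \<phi>2) / 3) \<and>
                Wy = cis \<theta> * ((1 + cis (2*pi/3) * cis \<phi>1 + cis (-(2*pi/3)) * cis \<phi>2) / 3) \<and>
                Wz = cis \<theta> * ((1 + cis (-(2*pi/3)) * cis \<phi>1 + cis (2*pi/3) * cis \<phi>2) / 3))"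
    then obtain \<theta> \<phi>1 \<phi>2 where nz: "Wx \<noteq> 0" "Wy \<noteq> 0" "Wz \<noteq> 0" and
      p: "Wx = cis \<theta> * ((1 + cis \<phi>1 + cis \<phi>2) / 3)"
        "Wy = cis \<theta> * ((1 + cis (2*pi/3) * cis \<phi>1 + cis (-(2*pi/3)) * cis \<phi>2) / 3)"
        "Wz = cis \<theta> * ((1 + cis (-(2*pi/3)) * cis \<phi>1 + cis (2*pi/3) * cis \<phi>2) / 3)" by blast
    show "hsqw Wx Wy Wz" unfolding hsqw_def using nz unitary_if[OF param_imp[OF p]] by blast
  qed
  define Wy :: complex where "Wy = cis 0 * ((1 + cis (2*pi/3) * cis 0 + cis (-(2*pi/3)) * cis pi) / 3)"
  define Wz :: complex where "Wz = cis 0 * ((1 + cis (-(2*pi/3)) * cis 0 + cis (2*pi/3) * cis pi) / 3)"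
  define Wx :: complex where "Wx = cis 0 * ((1 + cis 0 + cis pi) / 3)"
  have "Im Wy \<noteq> 0" "Im Wz \<noteq> 0" "Re Wx \<noteq> 0"
    unfolding Wx_def Wy_def Wz_def by (simp_all add: cos_120 sin_120)
  then have "Wx \<noteq> 0" "Wy \<noteq> 0" "Wz \<noteq> 0" by auto
  then have "hsqw Wx Wy Wz" unfolding A using Wx_def Wy_def Wz_def by blast
  then show ?thesis using A by blast
qed

end
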